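(* Suppose $\Phi\ge6H^2\log(12|\mathcal S|^2|\mathcal A|/\delta)$ and $H\ge2$. On the event $\mathcal E^P$, for every $(s,a,s')\in\mathcal S\times\mathcal A\times\mathcal S$, $$\Big(1-\frac1H\Big)\widehat{\mathbb P}^\dagger(s'\mid s,a)\le\mathbb P^\dagger(s'\mid s,a)\le\Big(1+\frac1H\Big)\widehat{\mathbb P}^\dagger(s'\mid s,a).$$
   Context: Finite state space $\mathcal S$, finite action space $\mathcal A$, transition kernel $\mathbb P(\cdot\mid s,a)$ on $\mathcal S$, $\delta\in(0,1)$. An offline dataset of tuples $(s,a,s')$ with $s'\sim\mathbb P(\cdot\mid s,a)$ gives counts $N(s,a)$, $N(s,a,s')$. With an absorbing state $s^\dagger\notin\mathcal S$: $\mathbb P^\dagger(s'\mid s,a)=\mathbb P(s'\mid s,a)$ if $N(s,a,s')\ge\Phi$ and $0$ otherwise; $\widehat{\mathbb P}^\dagger(s'\mid s,a)=N(s,a,s')/N(s,a)$ if $N(s,a,s')\ge\Phi$ and $0$ otherwise (for $s'\in\mathcal S$). $\mathcal E^P$ is the event that for all $(s,a,s')$ with $N(s,a,s')\ge\Phi$, $|\widehat{\mathbb P}^\dagger(s'\mid s,a)-\mathbb P^\dagger(s'\mid s,a)|\le\sqrt{\frac{2\widehat{\mathbb P}^\dagger(s'\mid s,a)}{N(s,a)}\log\frac{12|\mathcal S|^2|\mathcal A|}{\delta}}+\frac{14}{3N(s,a)}\log\frac{12|\mathcal S|^2|\mathcal A|}{\delta}$. *)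

theory Defs
  imports "HOL-Probability.Probability"
begin

definition cnt3 :: "('s \<times> 'a \<times> 's) list \<Rightarrow> 's \<Rightarrow> 'a \<Rightarrow> 's \<Rightarrow> nat" where
  "cnt3 D s a s' = length (filter (\<lambda>x. x = (s, a, s')) D)"

definition cnt2 :: "('s \<times> 'a \<times> 's) list \<Rightarrow> 's \<Rightarrow> 'a \<Rightarrow> nat" where
  "cnt2 D s a = length (filter (\<lambda>(x, y, _). x = s \<and> y = a) D)"

definition Pdag :: "('s \<Rightarrow> 'a \<Rightarrow> 's pmf) \<Rightarrow> ('s \<times> 'a \<times> 's) list \<Rightarrow> real \<Rightarrow> 's \<Rightarrow> 'a \<Rightarrow> 's \<Rightarrow> real" where
  "Pdag P D \<Phi> s a s' = (if real (cnt3 D s a s') \<ge> \<Phi> then pmf (P s a) s' else 0)"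

definition Phat_dag :: "('s \<times> 'a \<times> 's) list \<Rightarrow> real \<Rightarrow> 's \<Rightarrow> 'a \<Rightarrow> 's \<Rightarrow> real" where
  "Phat_dag D \<Phi> s a s' = (if real (cnt3 D s a s') \<ge> \<Phi> then real (cnt3 D s a s') / real (cnt2 D s a) else 0)"

definition event_EP :: "('s::finite \<Rightarrow> 'a::finite \<Rightarrow> 's pmf) \<Rightarrow> ('s \<times> 'a \<times> 's) list \<Rightarrow> real \<Rightarrow> real \<Rightarrow> bool" where
  "event_EP P D \<Phi> \<delta> \<longleftrightarrow>
    (\<forall>s a s'. real (cnt3 D s a s') \<ge> \<Phi> \<longrightarrow>
       \<bar>Phat_dag D \<Phi> s a s' - Pdag P D \<Phi> s a s'\<bar>
       \<le> sqrt (2 * Phat_dag D \<Phi> s a s' / real (cnt2 D s a) * ln (12 * real CARD('s)^2 * real CARD('a) / \<delta>))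
          + 14 / (3 * real (cnt2 D s a)) * ln (12 * real CARD('s)^2 * real CARD('a) / \<delta>))"

end

theory Submission
  imports Defs
begin

lemma cnt3_le_cnt2: "cnt3 D s a s' \<le> cnt2 D s a"
  unfolding cnt3_def cnt2_def
  by (induction D) auto

lemma key:
  fixes n N L h :: real
  assumes n: "0 < n" and nN: "n \<le> N" and L: "0 < L" and h: "2 \<le> h"
    and Ln: "6 * h^2 * L \<le> n"
  shows "sqrt (2 * (n / N) / N * L) + 14 / (3 * N) * L \<le> (n / N) / h"
proof -
  have N: "0 < N" using n nN by linarith
  have hp: "0 < h" using h by linarith
  have s1: "2 * (n / N) / N * L = (2 * n * L) / N^2" by (simp add: power2_eq_square)
  have "sqrt (2 * n * L) \<le> 6/10 * n / h"
  proof (rule real_le_lsqrt)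
    show "0 \<le> 6/10 * n / h" using n hp by simp
    have "2 * n * L * (6 * h^2) \<le> 2 * n * n"
      using Ln n by (simp add: mult_left_mono algebra_simps)
    hence "2 * n * L \<le> 2 * n * n / (6*h^2)" using hp by (simp add: field_simps)
    also have "\<dots> \<le> (6/10 * n / h)^2" using hp n by (simp add: field_simps power2_eq_square)
    finally show "2 * n * L \<le> (6/10 * n / h)^2" .
  qed
  hence a: "sqrt (2 * (n / N) / N * L) \<le> 6/10 * n / h / N"
  proof -
    have "sqrt (2 * (n / N) / N * L) = sqrt (2 * n * L) / N"
      using N by (simp add: s1 real_sqrt_divide)
    also have "\<dots> \<le> (6/10 * n / h) / N" using N \<open>sqrt (2 * n * L) \<le> 6/10 * n / h\<close>
      by (intro divide_right_mono) auto
    finally show ?thesis by simp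
  qed
  have "14 / 3 * L \<le> 14/3 * (n / (6*h^2))" using Ln hp by (simp add: field_simps)
  also have "\<dots> \<le> 4/10 * n / h"
  proof -
    have "14/3 * (n / (6*h^2)) = (7/9 * n / h) / h" by (simp add: field_simps power2_eq_square)
    also have "\<dots> \<le> (7/9 * n / h) / 2" using h hp n by (intro divide_left_mono) auto
    finally show ?thesis using hp n by (simp add: field_simps)
  qed
  finally have b: "14 / (3 * N) * L \<le> 4/10 * n / h / N"
    using N by (simp add: field_simps)
  have "6/10 * n / h / N + 4/10 * n / h / N = (n / N) / h" by (simp add: field_simps)
  thus ?thesis using a b by linarith
qed

theorem lemma16:
  fixes P :: "'s::finite \<Rightarrow> 'a::finite \<Rightarrow> 's pmf"
    and D :: "('s \<times> 'a \<times> 's) list"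
    and \<Phi> \<delta> :: real and H :: nat
  assumes "0 < \<delta>" "\<delta> < 1"
    and "\<Phi> \<ge> 6 * real H ^ 2 * ln (12 * real CARD('s)^2 * real CARD('a) / \<delta>)"
    and "H \<ge> 2"
    and "event_EP P D \<Phi> \<delta>"
  shows "\<forall>s a s'. (1 - 1 / real H) * Phat_dag D \<Phi> s a s' \<le> Pdag P D \<Phi> s a s'
                 \<and> Pdag P D \<Phi> s a s' \<le> (1 + 1 / real H) * Phat_dag D \<Phi> s a s'"
proof (intro allI)
  fix s a s'
  define L where "L = ln (12 * real CARD('s)^2 * real CARD('a) / \<delta>)"
  have "1 \<le> real CARD('s)^2" by simp
  moreover have "1 \<le> real CARD('a)" by simp
  ultimately have "1 \<le> real CARD('s)^2 * real CARD('a)"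
    using mult_mono[of 1 "real CARD('s)^2" 1 "real CARD('a)"] by simp
  hence "12 \<le> 12 * real CARD('s)^2 * real CARD('a)" by simp
  moreover have "12 * real CARD('s)^2 * real CARD('a) \<le> 12 * real CARD('s)^2 * real CARD('a) / \<delta>"
    using assms(1,2) by (simp add: field_simps)
  ultimately have "1 < 12 * real CARD('s)^2 * real CARD('a) / \<delta>" by linarith
  hence Lp: "0 < L" unfolding L_def by simp
  show "(1 - 1 / real H) * Phat_dag D \<Phi> s a s' \<le> Pdag P D \<Phi> s a s'
                 \<and> Pdag P D \<Phi> s a s' \<le> (1 + 1 / real H) * Phat_dag D \<Phi> s a s'"
  proof (cases "real (cnt3 D s a s') \<ge> \<Phi>")
    case False thus ?thesis by (simp add: Pdag_def Phat_dag_def)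
  next
    case True
    let ?n = "real (cnt3 D s a s')" and ?N = "real (cnt2 D s a)"
    have h2: "2 \<le> real H" using assms(4) by simp
    have "0 < 6 * real H ^ 2 * L" using Lp h2 by simp
    hence Ln: "6 * real H ^ 2 * L \<le> ?n" and np: "0 < ?n"
      using True assms(3) unfolding L_def by linarith+
    have nN: "?n \<le> ?N" using cnt3_le_cnt2 by simp
    have ev: "\<bar>Phat_dag D \<Phi> s a s' - Pdag P D \<Phi> s a s'\<bar>
       \<le> sqrt (2 * Phat_dag D \<Phi> s a s' / ?N * L) + 14 / (3 * ?N) * L"
      using assms(5) True unfolding event_EP_def L_def by blast
    have ph: "Phat_dag D \<Phi> s a s' = ?n / ?N" using True by (simp add: Phat_dag_def)
    have "\<bar>Phat_dag D \<Phi> s a s' - Pdag P D \<Phi> s a s'\<bar> \<le> Phat_dag D \<Phi> s a s' / real H"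
      using ev key[OF np nN Lp h2 Ln] ph by simp
    thus ?thesis by (simp add: algebra_simps abs_le_iff)
  qed
qed

end
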